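(* For every $d\ge 3$, the group $G_d$ is non-contracting: there is no finite subset $S\subseteq G_d$ such that for every $g\in G_d$ there exists $k\in\mathbb N$ with $g|_u\in S$ for all vertices $u$ with $|u|\ge k$.
   Context: Let $d\ge 3$, $X=\{1,\dots,d\}$, $X^*$ the free monoid on $X$, and $T$ the $d$-regular rooted tree with vertex set $X^*$. $\mathrm{Aut}(T)$ is the group of root-preserving tree automorphisms, with product written left-to-right: $(gh)(u)=h(g(u))$. For $g\in\mathrm{Aut}(T)$ and $u\in X^*$ the section $g|_u$ is defined by $g(uv)=g(u)\,g|_u(v)$. We write $g=(g|_1,\dots,g|_d)\lambda_g$, where $\lambda_g\in S_d$ is the permutation induced by $g$ on $X$, and $e$ is the identity. $\overline{j}\in\{1,\dots,d\}$ denotes $j$ mod $d$. The group $G_d\le \mathrm{Aut}(T)$ is generated by $A=\{a_1,\dots,a_d\}$, where $a_i$ acts on the first level as the transposition $(i\ \overline{i+1})$, with sections $a_i|_i=a_i$, $a_i|_{\overline{i+1}}=a_{\overline{i+1}}$, and $a_i|_x=e$ otherwise (e.g. $a_1=(a_1,a_2,e,\dots,e)(1\,2)$, $a_d=(a_1,e,\dots,e,a_d)(d\ 1)$). *)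

theory Defs
  imports Main
begin

text \<open>Vertices of the d-regular rooted tree are words (lists) over X = {1..d}.
  Tree automorphisms are represented as functions on nat lists; the generators
  (and hence all elements of G_d) fix every letter outside X, so they are determined
  by their action on X*.\<close>

definition nxt :: "nat \<Rightarrow> nat \<Rightarrow> nat" where
  "nxt d i = (if i = d then 1 else i + 1)"

fun gen :: "nat \<Rightarrow> nat \<Rightarrow> nat list \<Rightarrow> nat list" where
  "gen d i [] = []"
| "gen d i (x # v) =
     (if x = i then nxt d i # gen d i v
      else if x = nxt d i then i # gen d (nxt d i) v
      else x # v)"

inductive_set Gd :: "nat \<Rightarrow> (nat list \<Rightarrow> nat list) set" for d :: nat where
  ident: "id \<in> Gd d"
| gen_mult: "\<lbrakk>g \<in> Gd d; i \<in> {1..d}\<rbrakk> \<Longrightarrow> g \<circ> gen d i \<in> Gd d"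
| gen_inv_mult: "\<lbrakk>g \<in> Gd d; i \<in> {1..d}\<rbrakk> \<Longrightarrow> g \<circ> inv (gen d i) \<in> Gd d"

text \<open>Section g|_u, defined by g(uv) = g(u) g|_u(v).\<close>
definition sect :: "(nat list \<Rightarrow> nat list) \<Rightarrow> nat list \<Rightarrow> nat list \<Rightarrow> nat list" where
  "sect g u = (\<lambda>v. drop (length u) (g (u @ v)))"

end

theory Submission
  imports Defs "HOL-Number_Theory.Cong"
begin

definition rot :: "nat \<Rightarrow> nat \<Rightarrow> nat \<Rightarrow> nat" where
  "rot d r j = (r - 1 + j) mod d + 1"

lemma rot_0: "1 \<le> r \<Longrightarrow> r \<le> d \<Longrightarrow> rot d r 0 = r"
  unfolding rot_def by simp

lemma rot_range: "1 \<le> d \<Longrightarrow> rot d r j \<in> {1..d}"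
  unfolding rot_def by (simp add: Suc_leI)

lemma rot_add: "1 \<le> d \<Longrightarrow> rot d (rot d r a) b = rot d r (a + b)"
  unfolding rot_def by (simp add: mod_add_left_eq add.assoc)

lemma nxt_rot: "1 \<le> d \<Longrightarrow> nxt d (rot d r j) = rot d r (Suc j)"
proof -
  assume d: "1 \<le> d"
  define m where "m = r - 1 + j"
  have s: "r - 1 + Suc j = Suc m" using m_def by simp
  have ml: "m mod d < d" using d by simp
  show ?thesis unfolding rot_def nxt_def s m_def[symmetric]
  proof (cases "m mod d + 1 = d")
    case True
    then have "Suc m mod d = 0" using d
      by (metis add.commute mod_Suc plus_1_eq_Suc)
    then show "(if m mod d + 1 = d then 1 else m mod d + 1 + 1) = Suc m mod d + 1"
      using True d by simp
  next
    case False
    then have "Suc m mod d = Suc (m mod d)" using d ml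
      by (simp add: mod_Suc)
    then show "(if m mod d + 1 = d then 1 else m mod d + 1 + 1) = Suc m mod d + 1"
      using False d by auto
  qed
qed

lemma rot_inj: "a < d \<Longrightarrow> b < d \<Longrightarrow> rot d r a = rot d r b \<Longrightarrow> a = b"
  unfolding rot_def
proof -
  assume a: "a < d" and b: "b < d" and e: "(r - 1 + a) mod d + 1 = (r - 1 + b) mod d + 1"
  have "(r - 1 + a) mod d = (r - 1 + b) mod d" using e by simp
  then have "[r - 1 + a = r - 1 + b] (mod d)" by (simp add: cong_def)
  then have "[a = b] (mod d)" by (simp add: cong_add_lcancel_nat)
  then show "a = b" using a b by (simp add: cong_def)
qed

lemma rot_neq: "a < d \<Longrightarrow> b < d \<Longrightarrow> a \<noteq> b \<Longrightarrow> rot d r a \<noteq> rot d r b"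
  using rot_inj by blast

lemma rot_mod: "rot d r (d + j) = rot d r j"
  unfolding rot_def by (metis add.assoc add.commute mod_add_self2)

lemma rot_d: "1 \<le> r \<Longrightarrow> r \<le> d \<Longrightarrow> rot d r d = r"
  using rot_mod[of d r 0] rot_0 by simp

fun DescP :: "nat \<Rightarrow> nat \<Rightarrow> nat \<Rightarrow> nat list \<Rightarrow> nat list" where
  "DescP d r 0 = id"
| "DescP d r (Suc k) = gen d (rot d r k) \<circ> DescP d r k"

fun AscP :: "nat \<Rightarrow> nat \<Rightarrow> nat \<Rightarrow> nat list \<Rightarrow> nat list" where
  "AscP d r 0 = id"
| "AscP d r (Suc k) = AscP d r k \<circ> gen d (rot d r k)"

lemma DescP_act: "3 \<le> d \<Longrightarrow> k \<le> d - 1 \<Longrightarrow>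
 (\<forall>v. DescP d r k (rot d r 0 # v) = rot d r k # DescP d r k v) \<and>
 (\<forall>j v. 1 \<le> j \<longrightarrow> j \<le> k \<longrightarrow> DescP d r k (rot d r j # v) = rot d r (j-1) # gen d (rot d r j) v) \<and>
 (\<forall>j v. k < j \<longrightarrow> j \<le> d-1 \<longrightarrow> DescP d r k (rot d r j # v) = rot d r j # v)"
proof (induction k)
  case 0
  then show ?case by simp
next
  case (Suc k)
  then have d: "3 \<le> d" and k: "Suc k \<le> d - 1" by auto
  have IH: "(\<forall>v. DescP d r k (rot d r 0 # v) = rot d r k # DescP d r k v) \<and>
 (\<forall>j v. 1 \<le> j \<longrightarrow> j \<le> k \<longrightarrow> DescP d r k (rot d r j # v) = rot d r (j-1) # gen d (rot d r j) v) \<and>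
 (\<forall>j v. k < j \<longrightarrow> j \<le> d-1 \<longrightarrow> DescP d r k (rot d r j # v) = rot d r j # v)"
    using Suc by auto
  have nx: "nxt d (rot d r k) = rot d r (Suc k)" using nxt_rot d by simp
  have ne: "rot d r (Suc k) \<noteq> rot d r k" using rot_neq[of "Suc k" d k r] k d by simp
  have P1: "\<forall>v. DescP d r (Suc k) (rot d r 0 # v) = rot d r (Suc k) # DescP d r (Suc k) v"
    using IH nx by simp
  have P2: "\<forall>j v. 1 \<le> j \<longrightarrow> j \<le> Suc k \<longrightarrow> DescP d r (Suc k) (rot d r j # v) = rot d r (j-1) # gen d (rot d r j) v"
  proof (intro allI impI)
    fix j v assume j1: "1 \<le> j" and j2: "j \<le> Suc k"
    show "DescP d r (Suc k) (rot d r j # v) = rot d r (j-1) # gen d (rot d r j) v"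
    proof (cases "j = Suc k")
      case True
      then show ?thesis using IH nx ne k by simp
    next
      case False
      have a: "rot d r (j-1) \<noteq> rot d r k" using rot_neq[of "j-1" d k r] False j1 j2 k by simp
      have b: "rot d r (j-1) \<noteq> rot d r (Suc k)" using rot_neq[of "j-1" d "Suc k" r] False j1 j2 k by simp
      show ?thesis using IH a b nx j1 j2 False by simp
    qed
  qed
  have P3: "\<forall>j v. Suc k < j \<longrightarrow> j \<le> d-1 \<longrightarrow> DescP d r (Suc k) (rot d r j # v) = rot d r j # v"
  proof (intro allI impI)
    fix j v assume j1: "Suc k < j" and j2: "j \<le> d - 1"
    have a: "rot d r j \<noteq> rot d r k" using rot_neq[of j d k r] j1 j2 d by simp
    have b: "rot d r j \<noteq> rot d r (Suc k)" using rot_neq[of j d "Suc k" r] j1 j2 d by simp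
    show "DescP d r (Suc k) (rot d r j # v) = rot d r j # v" using IH a b nx j1 j2 by simp
  qed
  show ?case using P1 P2 P3 by blast
qed

lemma AscP_act: "3 \<le> d \<Longrightarrow> k \<le> d - 1 \<Longrightarrow>
 (\<forall>v. AscP d r k (rot d r k # v) = rot d r 0 # AscP d (rot d r 1) k v) \<and>
 (\<forall>j v. j < k \<longrightarrow> AscP d r k (rot d r j # v) = rot d r (Suc j) # gen d (rot d r j) v) \<and>
 (\<forall>j v. k < j \<longrightarrow> j \<le> d-1 \<longrightarrow> AscP d r k (rot d r j # v) = rot d r j # v)"
proof (induction k)
  case 0
  then show ?case by simp
next
  case (Suc k)
  then have d: "3 \<le> d" and k: "Suc k \<le> d - 1" by auto
  have IH: "(\<forall>v. AscP d r k (rot d r k # v) = rot d r 0 # AscP d (rot d r 1) k v) \<and>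
 (\<forall>j v. j < k \<longrightarrow> AscP d r k (rot d r j # v) = rot d r (Suc j) # gen d (rot d r j) v) \<and>
 (\<forall>j v. k < j \<longrightarrow> j \<le> d-1 \<longrightarrow> AscP d r k (rot d r j # v) = rot d r j # v)"
    using Suc by auto
  have nx: "nxt d (rot d r k) = rot d r (Suc k)" using nxt_rot d by simp
  have ne: "rot d r (Suc k) \<noteq> rot d r k" using rot_neq[of "Suc k" d k r] k d by simp
  have ra: "rot d (rot d r 1) k = rot d r (Suc k)" using rot_add[of d r 1 k] d by simp
  have P1: "\<forall>v. AscP d r (Suc k) (rot d r (Suc k) # v) = rot d r 0 # AscP d (rot d r 1) (Suc k) v"
    using IH nx ne ra by simp
  have P2: "\<forall>j v. j < Suc k \<longrightarrow> AscP d r (Suc k) (rot d r j # v) = rot d r (Suc j) # gen d (rot d r j) v"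
  proof (intro allI impI)
    fix j v assume j2: "j < Suc k"
    show "AscP d r (Suc k) (rot d r j # v) = rot d r (Suc j) # gen d (rot d r j) v"
    proof (cases "j = k")
      case True
      then show ?thesis using IH nx ne k by simp
    next
      case False
      have a: "rot d r j \<noteq> rot d r k" using rot_neq[of "j" d k r] False j2 k by simp
      have b: "rot d r j \<noteq> rot d r (Suc k)" using rot_neq[of "j" d "Suc k" r] False j2 k by simp
      show ?thesis using IH a b nx j2 False by simp
    qed
  qed
  have P3: "\<forall>j v. Suc k < j \<longrightarrow> j \<le> d-1 \<longrightarrow> AscP d r (Suc k) (rot d r j # v) = rot d r j # v"
  proof (intro allI impI)
    fix j v assume j1: "Suc k < j" and j2: "j \<le> d - 1"
    have a: "rot d r j \<noteq> rot d r k" using rot_neq[of j d k r] j1 j2 d by simp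
    have b: "rot d r j \<noteq> rot d r (Suc k)" using rot_neq[of j d "Suc k" r] j1 j2 d by simp
    show "AscP d r (Suc k) (rot d r j # v) = rot d r j # v" using IH a b nx j1 j2 by simp
  qed
  show ?case using P1 P2 P3 by blast
qed

lemma DescP_d: "1 \<le> d \<Longrightarrow> DescP d r d = gen d (rot d r (d - Suc 0)) \<circ> DescP d r (d - Suc 0)"
proof -
  assume "1 \<le> d" then obtain e where "d = Suc e" by (cases d) auto
  then show ?thesis by simp
qed

lemma AscP_d: "1 \<le> d \<Longrightarrow> AscP d r d = AscP d r (d - Suc 0) \<circ> gen d (rot d r (d - Suc 0))"
proof -
  assume "1 \<le> d" then obtain e where "d = Suc e" by (cases d) auto
  then show ?thesis by simp
qed

lemma Desc_0: "3 \<le> d \<Longrightarrow> DescP d r d (rot d r 0 # v) = rot d r 0 # DescP d r d v"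
proof -
  assume d: "3 \<le> d"
  have e: "d = Suc (d - 1)" using d by simp
  have A: "DescP d r (d - Suc 0) (rot d r 0 # v) = rot d r (d - Suc 0) # DescP d r (d - Suc 0) v"
    using DescP_act[of d "d - Suc 0" r] d by simp
  have nx: "nxt d (rot d r (d - Suc 0)) = rot d r 0" using nxt_rot[of d r "d - Suc 0"] d rot_mod[of d r 0] e by simp
  have d1: "1 \<le> d" using d by simp
  show ?thesis unfolding DescP_d[OF d1] comp_def using d by (simp add: A nx)
qed

lemma Desc_1: "3 \<le> d \<Longrightarrow> DescP d r d (rot d r (Suc 0) # v) = rot d r (d - Suc 0) # gen d (rot d r 0) (gen d (rot d r 1) v)"
proof -
  assume d: "3 \<le> d"
  have e: "d = Suc (d - 1)" using d by simp
  have A: "DescP d r (d - Suc 0) (rot d r (Suc 0) # v) = rot d r 0 # gen d (rot d r 1) v"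
    using DescP_act[of d "d - Suc 0" r] d by simp
  have nx: "nxt d (rot d r (d - Suc 0)) = rot d r 0" using nxt_rot[of d r "d - Suc 0"] d rot_mod[of d r 0] e by simp
  have ne: "rot d r 0 \<noteq> rot d r (d - Suc 0)" using rot_neq[of 0 d "d - Suc 0" r] d by simp
  have d1: "1 \<le> d" using d by simp
  show ?thesis unfolding DescP_d[OF d1] comp_def using d by (simp add: A nx ne)
qed

lemma Desc_mid: "3 \<le> d \<Longrightarrow> 2 \<le> j \<Longrightarrow> j \<le> d - 1 \<Longrightarrow> DescP d r d (rot d r j # v) = rot d r (j-1) # gen d (rot d r j) v"
proof -
  assume d: "3 \<le> d" and j: "2 \<le> j" "j \<le> d - 1"
  have e: "d = Suc (d - 1)" using d by simp
  have A: "DescP d r (d - Suc 0) (rot d r j # v) = rot d r (j-1) # gen d (rot d r j) v"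
    using DescP_act[of d "d - Suc 0" r] d j by simp
  have nx: "nxt d (rot d r (d - Suc 0)) = rot d r 0" using nxt_rot[of d r "d - Suc 0"] d rot_mod[of d r 0] e by simp
  have ne1: "rot d r (j - Suc 0) \<noteq> rot d r (d - Suc 0)" using rot_neq[of "j-1" d "d - Suc 0" r] d j by simp
  have ne2: "rot d r (j - Suc 0) \<noteq> rot d r 0" using rot_neq[of "j-1" d 0 r] d j by simp
  have d1: "1 \<le> d" using d by simp
  show ?thesis unfolding DescP_d[OF d1] comp_def using d by (simp add: A nx ne1 ne2)
qed

lemma Asc_last: "3 \<le> d \<Longrightarrow> AscP d r d (rot d r (d - Suc 0) # v) = rot d r (Suc 0) # gen d (rot d r 0) (gen d (rot d r (d - Suc 0)) v)"
proof -
  assume d: "3 \<le> d"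
  have e: "d = Suc (d - 1)" using d by simp
  have A: "AscP d r (d - Suc 0) (rot d r 0 # w) = rot d r (Suc 0) # gen d (rot d r 0) w" for w
    using AscP_act[of d "d - Suc 0" r] d by simp
  have nx: "nxt d (rot d r (d - Suc 0)) = rot d r 0" using nxt_rot[of d r "d - Suc 0"] d rot_mod[of d r 0] e by simp
  have d1: "1 \<le> d" using d by simp
  show ?thesis unfolding AscP_d[OF d1] comp_def using d by (simp add: A nx)
qed

lemma Asc_mid: "3 \<le> d \<Longrightarrow> 1 \<le> j \<Longrightarrow> j \<le> d - 2 \<Longrightarrow> AscP d r d (rot d r j # v) = rot d r (Suc j) # gen d (rot d r j) v"
proof -
  assume d: "3 \<le> d" and j: "1 \<le> j" "j \<le> d - 2"
  have e: "d = Suc (d - 1)" using d by simp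
  have A: "AscP d r (d - Suc 0) (rot d r j # w) = rot d r (Suc j) # gen d (rot d r j) w" for w
    using AscP_act[of d "d - Suc 0" r] d j by simp
  have nx: "nxt d (rot d r (d - Suc 0)) = rot d r 0" using nxt_rot[of d r "d - Suc 0"] d rot_mod[of d r 0] e by simp
  have ne1: "rot d r j \<noteq> rot d r (d - Suc 0)" using rot_neq[of "j" d "d - Suc 0" r] d j by simp
  have ne2: "rot d r j \<noteq> rot d r 0" using rot_neq[of "j" d 0 r] d j by simp
  have d1: "1 \<le> d" using d by simp
  show ?thesis unfolding AscP_d[OF d1] comp_def using d by (simp add: A nx ne1 ne2)
qed

lemma Desc_pow: "3 \<le> d \<Longrightarrow> 1 \<le> i \<Longrightarrow> i + m \<le> d - 1 \<Longrightarrow>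
  (DescP d r d ^^ m) (rot d r (i + m) # v) = rot d r i # AscP d (rot d r (i+1)) m v"
proof (induction m arbitrary: v)
  case 0
  then show ?case by simp
next
  case (Suc m)
  have D: "DescP d r d (rot d r (i + Suc m) # v) = rot d r (i + m) # gen d (rot d r (i + Suc m)) v"
    using Desc_mid[of d "i + Suc m" r v] Suc.prems by simp
  have ra: "rot d (rot d r (Suc i)) m = rot d r (Suc (i + m))" using rot_add[of d r "i+1" m] Suc.prems by simp
  show ?case unfolding funpow_Suc_right comp_def D using Suc by (simp add: ra)
qed

lemma Asc_pow: "3 \<le> d \<Longrightarrow> 1 \<le> i \<Longrightarrow> i + m \<le> d - 1 \<Longrightarrow>
  (AscP d r d ^^ m) (rot d r i # v) = rot d r (i + m) # DescP d (rot d r i) m v"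
proof (induction m arbitrary: v)
  case 0
  then show ?case by simp
next
  case (Suc m)
  have ra: "rot d (rot d r i) m = rot d r (i + m)" using rot_add[of d r i m] Suc.prems by simp
  show ?case using Suc Asc_mid[of d "i+m" r] by (simp add: ra)
qed

lemma DescP_prepend: "1 \<le> d \<Longrightarrow> DescP d s (Suc m) = DescP d (rot d s 1) m \<circ> gen d (rot d s 0)"
proof (induction m)
  case 0
  then show ?case by simp
next
  case (Suc m)
  have ra: "rot d (rot d s (Suc 0)) m = rot d s (Suc m)" using rot_add[of d s 1 m] Suc.prems by simp
  have "DescP d s (Suc (Suc m)) = gen d (rot d s (Suc m)) \<circ> DescP d s (Suc m)" by (simp only: DescP.simps)
  also have "\<dots> = gen d (rot d s (Suc m)) \<circ> (DescP d (rot d s 1) m \<circ> gen d (rot d s 0))"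
    by (simp only: Suc.IH[OF Suc.prems])
  also have "\<dots> = DescP d (rot d s 1) (Suc m) \<circ> gen d (rot d s 0)" using ra by (simp add: comp_assoc)
  finally show ?case .
qed

lemma fs: "(f ^^ Suc n) x = (f ^^ n) (f x)"
  by (simp add: funpow_swap1)

lemma F1: "3 \<le> d \<Longrightarrow> (DescP d r d ^^ (d-1)) (rot d r 1 # v) = rot d r 1 # AscP d (rot d r 2) d v"
proof -
  assume d: "3 \<le> d"
  define k where "k = d - 2"
  have dk: "d = Suc (Suc k)" and k1: "1 \<le> k" using d k_def by auto
  let ?f = "DescP d r d"
  define w where "w = gen d (rot d r 0) (gen d (rot d r 1) v)"
  have e1: "?f (rot d r 1 # v) = rot d r (1 + k) # w"
    using Desc_1[of d r v] d dk w_def by simp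
  have e2: "(?f ^^ k) (rot d r (1 + k) # w) = rot d r 1 # AscP d (rot d r (1+1)) k w"
    using Desc_pow[of d 1 k r w] d dk by simp
  have ra1: "rot d (rot d r 2) k = rot d r 0"
    using rot_add[of d r 2 k] rot_mod[of d r 0] dk by simp
  have ra2: "rot d (rot d r 2) (Suc k) = rot d r 1"
    using rot_add[of d r 2 "Suc k"] rot_mod[of d r 1] dk by simp
  have e3: "AscP d (rot d r 2) d v = AscP d (rot d r 2) k w"
    unfolding w_def using dk ra1 ra2 by simp
  have "(?f ^^ (d-1)) (rot d r 1 # v) = (?f ^^ k) (?f (rot d r 1 # v))"
    using dk by (metis fs diff_Suc_1 diff_Suc_Suc)
  also have "\<dots> = rot d r 1 # AscP d (rot d r 2) k w" using e1 e2 by (simp add: numeral_2_eq_2)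
  finally show ?thesis using e3 by simp
qed

lemma F2: "3 \<le> d \<Longrightarrow> (AscP d r d ^^ (d-1)) (rot d r (d-1) # v) = rot d r (d-1) # DescP d (rot d r (d-1)) d v"
proof -
  assume d: "3 \<le> d"
  define k where "k = d - 2"
  have dk: "d = Suc (Suc k)" and k1: "1 \<le> k" using d k_def by auto
  let ?g = "AscP d r d"
  define w where "w = gen d (rot d r 0) (gen d (rot d r (d-1)) v)"
  have e1: "?g (rot d r (d-1) # v) = rot d r 1 # w"
    using Asc_last[of d r v] d dk w_def by simp
  have e2: "(?g ^^ k) (rot d r 1 # w) = rot d r (1 + k) # DescP d (rot d r 1) k w"
    using Asc_pow[of d 1 k r w] d dk by simp
  have d1: "1 \<le> d" using d by simp
  have ra1: "rot d (rot d (rot d r (d-1)) 1) 1 = rot d r 1"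
    using rot_add[OF d1] rot_mod[of d r 1] dk by simp
  have ra2: "rot d (rot d (rot d r (d-1)) 1) 0 = rot d r 0"
    using rot_add[OF d1] rot_mod[of d r 0] dk by simp
  have ra3: "rot d (rot d r (d-1)) 0 = rot d r (d-1)"
    using rot_add[OF d1] by simp
  have "DescP d (rot d r (d-1)) d = DescP d (rot d r (d-1)) (Suc (Suc k))" using dk by simp
  also have "\<dots> = (DescP d (rot d (rot d (rot d r (d-1)) 1) 1) k \<circ> gen d (rot d (rot d (rot d r (d-1)) 1) 0))
      \<circ> gen d (rot d (rot d r (d-1)) 0)"
    by (simp only: DescP_prepend[OF d1])
  also have "\<dots> = DescP d (rot d r 1) k \<circ> gen d (rot d r 0) \<circ> gen d (rot d r (d-1))"
    by (simp only: ra1 ra2 ra3)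
  finally have e3: "DescP d (rot d r (d-1)) d v = DescP d (rot d r 1) k w" unfolding w_def by simp
  have "(?g ^^ (d-1)) (rot d r (d-1) # v) = (?g ^^ k) (?g (rot d r (d-1) # v))"
    using dk by (metis fs diff_Suc_1 diff_Suc_Suc)
  also have "\<dots> = rot d r (1 + k) # DescP d (rot d r 1) k w" using e1 e2 by simp
  finally show ?thesis using e3 dk by simp
qed

lemma MoveD: "3 \<le> d \<Longrightarrow> 1 \<le> m \<Longrightarrow> m \<le> d - 2 \<Longrightarrow> hd ((DescP d r d ^^ m) (rot d r 1 # v)) \<noteq> rot d r 1"
proof -
  assume d: "3 \<le> d" and m: "1 \<le> m" "m \<le> d - 2"
  obtain m' where mm: "m = Suc m'" using m by (cases m) auto
  let ?f = "DescP d r d"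
  define w where "w = gen d (rot d r 0) (gen d (rot d r 1) v)"
  define i where "i = d - 1 - m'"
  have e1: "?f (rot d r 1 # v) = rot d r (i + m') # w"
    using Desc_1[of d r v] d mm m w_def i_def by simp
  have e2: "(?f ^^ m') (rot d r (i + m') # w) = rot d r i # AscP d (rot d r (i+1)) m' w"
    using Desc_pow[of d i m' r w] d mm m i_def by simp
  have ne: "rot d r i \<noteq> rot d r 1" using rot_neq[of i d 1 r] d mm m i_def by simp
  have "(?f ^^ m) (rot d r 1 # v) = (?f ^^ m') (?f (rot d r 1 # v))" using mm by (simp only: fs)
  then show ?thesis using e1 e2 ne by simp
qed

lemma MoveA: "3 \<le> d \<Longrightarrow> 1 \<le> m \<Longrightarrow> m \<le> d - 2 \<Longrightarrow> hd ((AscP d r d ^^ m) (rot d r (d-1) # v)) \<noteq> rot d r (d-1)"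
proof -
  assume d: "3 \<le> d" and m: "1 \<le> m" "m \<le> d - 2"
  obtain m' where mm: "m = Suc m'" using m by (cases m) auto
  let ?g = "AscP d r d"
  define w where "w = gen d (rot d r 0) (gen d (rot d r (d-1)) v)"
  have e1: "?g (rot d r (d-1) # v) = rot d r 1 # w"
    using Asc_last[of d r v] d w_def by simp
  have e2: "(?g ^^ m') (rot d r 1 # w) = rot d r (1 + m') # DescP d (rot d r 1) m' w"
    using Asc_pow[of d 1 m' r w] d mm m by simp
  have ne: "rot d r (1 + m') \<noteq> rot d r (d-1)" using rot_neq[of "1+m'" d "d-1" r] d mm m by simp
  have "(?g ^^ m) (rot d r (d-1) # v) = (?g ^^ m') (?g (rot d r (d-1) # v))" using mm by (simp only: fs)
  then show ?thesis using e1 e2 ne by simp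
qed

lemma abstract_desc:
  assumes p: "2 \<le> p"
    and cyc: "\<And>v. (f ^^ p) (a # v) = a # h v"
    and mv: "\<And>m v. 1 \<le> m \<Longrightarrow> m < p \<Longrightarrow> hd ((f ^^ m) (a # v)) \<noteq> a"
    and fid: "f ^^ N = id" and N: "1 \<le> N"
  shows "\<exists>q. 1 \<le> q \<and> q < N \<and> h ^^ q = id"
proof -
  define q where "q = N div p"
  define s where "s = N mod p"
  have Nq: "N = s + p * q" unfolding q_def s_def by simp
  have pw: "((f ^^ p) ^^ n) (a # v) = a # (h ^^ n) v" for n v
    by (induction n arbitrary: v) (simp_all add: cyc)
  have dec: "(f ^^ N) x = (f ^^ s) (((f ^^ p) ^^ q) x)" for x
    using Nq by (simp add: funpow_add funpow_mult)
  have s0: "s = 0"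
  proof (rule ccontr)
    assume "s \<noteq> 0"
    then have "1 \<le> s" "s < p" using p s_def by auto
    then have "hd ((f ^^ s) (a # (h ^^ q) [])) \<noteq> a" using mv by blast
    moreover have "(f ^^ s) (a # (h ^^ q) []) = a # []" using dec[of "a # []"] pw[of q "[]"] fid by simp
    ultimately show False by simp
  qed
  have hq: "(h ^^ q) v = v" for v
    using dec[of "a # v"] pw[of q v] fid s0 by simp
  have "q \<noteq> 0" using Nq s0 N by auto
  moreover have "q < N" using Nq s0 p \<open>q \<noteq> 0\<close> by simp
  ultimately show ?thesis using hq by (intro exI[of _ q]) auto
qed

lemma descent: "3 \<le> d \<Longrightarrow> 1 \<le> N \<Longrightarrow> \<forall>r. DescP d r d ^^ N \<noteq> id \<and> AscP d r d ^^ N \<noteq> id"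
proof (induction N rule: less_induct)
  case (less N)
  have d: "3 \<le> d" and N: "1 \<le> N" using less.prems by auto
  show ?case
  proof (intro allI conjI notI)
    fix r assume fid: "DescP d r d ^^ N = id"
    obtain q where q: "1 \<le> q" "q < N" "AscP d (rot d r 2) d ^^ q = id"
      using abstract_desc[of "d-1" "DescP d r d" "rot d r 1" "AscP d (rot d r 2) d" N] d fid N
        F1[of d r] MoveD[of d _ r] by fastforce
    then show False using less.IH[of q] d by blast
  next
    fix r assume fid: "AscP d r d ^^ N = id"
    obtain q where q: "1 \<le> q" "q < N" "DescP d (rot d r (d-1)) d ^^ q = id"
      using abstract_desc[of "d-1" "AscP d r d" "rot d r (d-1)" "DescP d (rot d r (d-1)) d" N] d fid N
        F2[of d r] MoveA[of d _ r] by fastforce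
    then show False using less.IH[of q] d by blast
  qed
qed

fun ginv :: "nat \<Rightarrow> nat \<Rightarrow> nat list \<Rightarrow> nat list" where
  "ginv d i [] = []"
| "ginv d i (y # w) =
     (if y = nxt d i then i # ginv d i w
      else if y = i then nxt d i # ginv d (nxt d i) w
      else y # w)"

lemma nxt_neq: "2 \<le> d \<Longrightarrow> nxt d i \<noteq> i"
  unfolding nxt_def by auto

lemma gen_ginv: "2 \<le> d \<Longrightarrow> gen d i (ginv d i w) = w"
proof (induction w arbitrary: i)
  case Nil
  then show ?case by simp
next
  case (Cons y w)
  have ne: "nxt d i \<noteq> i" using nxt_neq Cons.prems by blast
  show ?case using Cons ne by auto
qed

lemma gen_surj: "2 \<le> d \<Longrightarrow> surj (gen d i)"
  using gen_ginv by (metis surjI)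

lemma DescP_surj: "2 \<le> d \<Longrightarrow> surj (DescP d r k)"
proof (induction k)
  case 0
  then show ?case by simp
next
  case (Suc k)
  show ?case unfolding DescP.simps by (rule comp_surj[OF Suc.IH[OF Suc.prems] gen_surj[OF Suc.prems]])
qed

lemma funpow_surj: "surj (f :: 'a \<Rightarrow> 'a) \<Longrightarrow> surj (f ^^ n)"
proof (induction n)
  case 0
  have "f ^^ 0 = id" by simp
  then show ?case by simp
next
  case (Suc n)
  show ?case unfolding funpow.simps(2) by (rule comp_surj[OF Suc.IH[OF Suc.prems] Suc.prems])
qed

lemma Gd_comp: "h \<in> Gd d \<Longrightarrow> g \<in> Gd d \<Longrightarrow> g \<circ> h \<in> Gd d"
proof (induction h rule: Gd.induct)
  case ident
  then show ?case by simp
next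
  case (gen_mult h i)
  then have "(g \<circ> h) \<circ> gen d i \<in> Gd d" using Gd.gen_mult by blast
  then show ?case by (simp only: comp_assoc)
next
  case (gen_inv_mult h i)
  then have "(g \<circ> h) \<circ> inv (gen d i) \<in> Gd d" using Gd.gen_inv_mult by blast
  then show ?case by (simp only: comp_assoc)
qed

lemma gen_Gd: "i \<in> {1..d} \<Longrightarrow> gen d i \<in> Gd d"
  using Gd.gen_mult[OF Gd.ident, of i d] by simp

lemma DescP_Gd: "1 \<le> d \<Longrightarrow> DescP d r k \<in> Gd d"
proof (induction k)
  case 0
  show ?case by (simp only: DescP.simps Gd.ident)
next
  case (Suc k)
  show ?case unfolding DescP.simps by (rule Gd_comp[OF Suc.IH[OF Suc.prems] gen_Gd[OF rot_range[OF Suc.prems]]])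
qed

lemma pow_Gd: "f \<in> Gd d \<Longrightarrow> f ^^ n \<in> Gd d"
  by (induction n) (simp_all add: Gd.ident Gd_comp)

lemma sect_append: "sect g (u @ w) = sect (sect g u) w"
  unfolding sect_def by (rule ext) (simp add: add.commute)

lemma sect_rep: "sect g [a] = g \<Longrightarrow> sect g (replicate k a) = g"
proof (induction k)
  case 0
  then show ?case unfolding sect_def by simp
next
  case (Suc k)
  have "replicate (Suc k) a = [a] @ replicate k a" by simp
  then show ?case using Suc sect_append by metis
qed

theorem theorem3p4:
  fixes d :: nat
  assumes "d \<ge> 3"
  shows "\<not> (\<exists>S. finite S \<and> S \<subseteq> Gd d \<and>
            (\<forall>g \<in> Gd d. \<exists>k::nat. \<forall>u \<in> lists {1..d}. length u \<ge> k \<longrightarrow> sect g u \<in> S))"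
proof
  assume "\<exists>S. finite S \<and> S \<subseteq> Gd d \<and>
            (\<forall>g \<in> Gd d. \<exists>k::nat. \<forall>u \<in> lists {1..d}. length u \<ge> k \<longrightarrow> sect g u \<in> S)"
  then obtain S where fS: "finite S" and hS: "\<forall>g \<in> Gd d. \<exists>k::nat. \<forall>u \<in> lists {1..d}. length u \<ge> k \<longrightarrow> sect g u \<in> S"
    by blast
  have d: "3 \<le> d" using assms .
  define c where "c = DescP d 1 d"
  have r10: "rot d 1 0 = 1" using rot_0[of 1 d] d by simp
  have c1: "c (1 # v) = 1 # c v" for v using Desc_0[of d 1 v] d r10 unfolding c_def by simp
  have c1': "c (Suc 0 # v) = Suc 0 # c v" for v using c1 by simp
  have cn1: "(c ^^ n) (Suc 0 # v) = Suc 0 # (c ^^ n) v" for n v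
    by (induction n) (simp_all add: c1')
  have sc: "sect (c ^^ n) [1] = c ^^ n" for n
    unfolding sect_def by (rule ext) (simp add: cn1)
  have inS: "c ^^ n \<in> S" for n
  proof -
    have "c ^^ n \<in> Gd d" unfolding c_def using pow_Gd DescP_Gd d by simp
    then obtain k where k: "\<forall>u \<in> lists {1..d}. length u \<ge> k \<longrightarrow> sect (c ^^ n) u \<in> S" using hS by blast
    have "replicate k 1 \<in> lists {1..d}" using d by auto
    then have "sect (c ^^ n) (replicate k 1) \<in> S" using k by simp
    then show ?thesis using sect_rep[OF sc] by simp
  qed
  have csurj: "surj c" unfolding c_def using DescP_surj d by simp
  have inj: "inj (\<lambda>n. c ^^ n)"
  proof (rule injI)
    fix i j assume eq: "c ^^ i = c ^^ j"
    show "i = j"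
    proof (rule ccontr)
      assume "i \<noteq> j"
      then consider "i < j" | "j < i" by linarith
      then show False
      proof cases
        case 1
        have "c ^^ j = c ^^ (j - i) \<circ> c ^^ i" using 1 by (simp add: funpow_add[symmetric])
        then have e: "c ^^ (j - i) \<circ> c ^^ i = id \<circ> c ^^ i" using eq by simp
        have "c ^^ (j - i) = id"
        proof
          fix x obtain y where "x = (c ^^ i) y" using funpow_surj[OF csurj, of i] by (metis surjD)
          then show "(c ^^ (j - i)) x = id x" using fun_cong[OF e, of y] by simp
        qed
        then show False using descent[of d "j - i"] d 1 unfolding c_def by auto
      next
        case 2
        have "c ^^ i = c ^^ (i - j) \<circ> c ^^ j" using 2 by (simp add: funpow_add[symmetric])
        then have e: "c ^^ (i - j) \<circ> c ^^ j = id \<circ> c ^^ j" using eq by simp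
        have "c ^^ (i - j) = id"
        proof
          fix x obtain y where "x = (c ^^ j) y" using funpow_surj[OF csurj, of j] by (metis surjD)
          then show "(c ^^ (i - j)) x = id x" using fun_cong[OF e, of y] by simp
        qed
        then show False using descent[of d "i - j"] d 2 unfolding c_def by auto
      qed
    qed
  qed
  have "range (\<lambda>n. c ^^ n) \<subseteq> S" using inS by auto
  then have "finite (range (\<lambda>n. c ^^ n))" using fS finite_subset by blast
  then have "finite (UNIV :: nat set)" using finite_imageD inj by blast
  then show False by simp
qed

end
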